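(* Let $\{C_\lambda\}$ be a combined rating rule satisfying (A1), (A2) and (A3). Then for every $n\ge1$, every $\lambda\in(0,\infty)^n$, every $R\in\mathbb{R}^n$ and every $\alpha>0$, $C_{\alpha\lambda}(R)=C_\lambda(R)$.
   Context: A combined rating rule assigns to every $n\ge1$ and every positive weight vector $\lambda=(\lambda_1,\dots,\lambda_n)\in(0,\infty)^n$ a function $C_\lambda:\mathbb{R}^n\to\mathbb{R}$. Write $\bar\lambda_B=\sum_{i\in B}\lambda_i$, $R_B=(R_i)_{i\in B}$, $\lambda_B=(\lambda_i)_{i\in B}$ for nonempty $B\subseteq\{1,\dots,n\}$ (inherited increasing order); $\mathbf 1$ is the all-ones vector. (A1) Same-scale normalization: $C_\lambda(r\mathbf 1)=r$ for all $\lambda$ and all $r\in\mathbb{R}$. (A2) Regularity and monotonicity: for each $n$, $(\lambda,R)\mapsto C_\lambda(R)$ is continuous on $(0,\infty)^n\times\mathbb{R}^n$; for each fixed $\lambda$, $C_\lambda$ is continuously differentiable with $\partial_i C_\lambda(R)>0$ for all $i$ and all $R$. (A3) Recursive consistency: for every ordered partition $(B_1,\dots,B_m)$ of $\{1,\dots,n\}$ into nonempty blocks, $C_\lambda(R)=C_{(\bar\lambda_{B_1},\dots,\bar\lambda_{B_m})}\big(C_{\lambda_{B_1}}(R_{B_1}),\dots,C_{\lambda_{B_m}}(R_{B_m})\big)$. *)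

theory Defs
  imports "HOL-Analysis.Analysis"
begin

text \<open>A combined rating rule is modelled as C :: real list \<Rightarrow> real list \<Rightarrow> real,
  where C lam R is the value of C_lam at R; it is only meaningful when
  lam is a nonempty list of positive weights and length R = length lam.
  Coordinates are indexed 0..n-1.\<close>

definition pos_weights :: "real list \<Rightarrow> bool" where
  "pos_weights lam \<longleftrightarrow> lam \<noteq> [] \<and> (\<forall>x\<in>set lam. x > 0)"

definition same_scale :: "(real list \<Rightarrow> real list \<Rightarrow> real) \<Rightarrow> bool" where
  "same_scale C \<longleftrightarrow> (\<forall>lam r. pos_weights lam \<longrightarrow> C lam (replicate (length lam) r) = r)"

text \<open>A point of
  R^n is represented by the first n coordinates of a function nat \<Rightarrow> real (product
  topology); a function depending only on the first n coordinates is continuous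
  for the product topology iff it is continuous on R^n.\<close>
definition joint_continuous :: "(real list \<Rightarrow> real list \<Rightarrow> real) \<Rightarrow> bool" where
  "joint_continuous C \<longleftrightarrow> (\<forall>n\<ge>1.
     continuous_on ({l :: nat \<Rightarrow> real. \<forall>i<n. l i > 0} \<times> UNIV)
       (\<lambda>(l, x :: nat \<Rightarrow> real). C (map l [0..<n]) (map x [0..<n])))"

text \<open>(A2) for fixed lam, C_lam is continuously differentiable with positive partial
  derivatives: each partial derivative exists everywhere, is positive, and is
  continuous in R (existence and continuity of all partials is C^1).\<close>
definition C1_pos_partials :: "(real list \<Rightarrow> real list \<Rightarrow> real) \<Rightarrow> bool" where
  "C1_pos_partials C \<longleftrightarrow> (\<forall>lam. pos_weights lam \<longrightarrow>
     (\<exists>D :: nat \<Rightarrow> real list \<Rightarrow> real. \<forall>i < length lam.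
        (\<forall>R. length R = length lam \<longrightarrow>
           ((\<lambda>t. C lam (R[i := t])) has_real_derivative D i R) (at (R ! i)) \<and> D i R > 0) \<and>
        continuous_on UNIV (\<lambda>x :: nat \<Rightarrow> real. D i (map x [0..<length lam]))))"

definition ordered_partition :: "nat set list \<Rightarrow> nat \<Rightarrow> bool" where
  "ordered_partition Bs n \<longleftrightarrow>
     (\<forall>B\<in>set Bs. B \<noteq> {}) \<and> \<Union>(set Bs) = {0..<n} \<and>
     (\<forall>j<length Bs. \<forall>k<length Bs. j \<noteq> k \<longrightarrow> Bs ! j \<inter> Bs ! k = {})"

definition recursive_consistency :: "(real list \<Rightarrow> real list \<Rightarrow> real) \<Rightarrow> bool" where
  "recursive_consistency C \<longleftrightarrow> (\<forall>lam R Bs.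
     pos_weights lam \<longrightarrow> length R = length lam \<longrightarrow> ordered_partition Bs (length lam) \<longrightarrow>
     C lam R = C (map (\<lambda>B. sum_list (nths lam B)) Bs)
                  (map (\<lambda>B. C (nths lam B) (nths R B)) Bs))"

end

theory Submission imports Defs begin

lemma nths_restrict: "nths xs A = nths xs {i\<in>A. i < length xs}"
  unfolding nths_def
  by (rule arg_cong[where f="map fst"], rule filter_cong) (auto simp: set_zip)

lemma nths_first: "nths (xs @ ys) {0..<length xs} = xs"
  by (simp add: nths_append nths_all)

lemma nths_second: "nths (xs @ ys) {length xs..<length xs + length ys} = ys"
proof -
  have e: "{i\<in>{length xs..<length xs + length ys}. i < length xs} = {}" by auto
  have "nths xs {length xs..<length xs + length ys} = []"
    by (metis e nths_restrict nths_empty)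
  then show ?thesis by (simp add: nths_append nths_all)
qed

lemma nths_single: "i < length xs \<Longrightarrow> nths xs {i} = [xs ! i]"
proof (induction xs arbitrary: i)
  case Nil then show ?case by simp
next
  case (Cons a xs)
  show ?case
  proof (cases i)
    case 0
    have "{j. Suc j \<in> {i}} = {}" using 0 by auto
    then show ?thesis using 0 by (simp add: nths_Cons)
  next
    case (Suc j)
    have "{k. Suc k \<in> {i}} = {j}" using Suc by auto
    then show ?thesis using Suc Cons by (simp add: nths_Cons)
  qed
qed

lemma nths_mod:
  assumes "i < length xs"
  shows "nths (concat (replicate k xs)) {m. m mod length xs = i} = replicate k (xs ! i)"
proof (induction k)
  case 0 then show ?case by simp
next
  case (Suc k)
  have "{j. j + length xs \<in> {m. m mod length xs = i}} = {m. m mod length xs = i}" by auto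
  moreover have "nths xs {m. m mod length xs = i} = [xs ! i]"
  proof -
    have "{j \<in> {m. m mod length xs = i}. j < length xs} = {i}" using assms by auto
    then have "nths xs {m. m mod length xs = i} = nths xs {i}" by (subst nths_restrict) simp
    also have "\<dots> = [xs ! i]" using assms by (rule nths_single)
    finally show ?thesis .
  qed
  ultimately show ?case using Suc by (simp add: nths_append)
qed

lemma pos_sum: "pos_weights xs \<Longrightarrow> sum_list xs > 0"
proof (induction xs)
  case Nil then show ?case by (simp add: pos_weights_def)
next
  case (Cons a xs)
  then show ?case
    by (cases "xs = []") (auto simp: pos_weights_def add_pos_pos)
qed

lemma pos_concat: "pos_weights lam \<Longrightarrow> k \<ge> 1 \<Longrightarrow> pos_weights (concat (replicate k lam))"
  by (cases k) (auto simp: pos_weights_def)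

lemma copies:
  assumes A1: "same_scale C" and A3: "recursive_consistency C"
    and lam: "pos_weights lam" and R: "length R = length lam"
  shows "k \<ge> 1 \<Longrightarrow> C (concat (replicate k lam)) (concat (replicate k R)) = C lam R"
proof (induction k rule: dec_induct)
  case base then show ?case by simp
next
  case (step k)
  define n where "n = length lam"
  have n0: "n > 0" using lam by (simp add: pos_weights_def n_def)
  define Lk where "Lk = concat (replicate k lam)"
  define Rk where "Rk = concat (replicate k R)"
  have lLk: "length Lk = k * n" by (simp add: Lk_def n_def length_concat sum_list_replicate)
  have lRk: "length Rk = k * n" using R by (simp add: Rk_def n_def length_concat sum_list_replicate)
  have pk: "pos_weights Lk" using pos_concat[OF lam step(1)] by (simp add: Lk_def)
  have kn: "k * n > 0" using n0 step(1) by simp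
  define Bs where "Bs = [{0..<n}, {n..<n + k*n}]"
  have op: "ordered_partition Bs (length (lam @ Lk))"
    unfolding ordered_partition_def Bs_def using n0 kn lLk
    by (auto simp: n_def less_Suc_eq nth_Cons')
  have pw: "pos_weights (lam @ Lk)" using lam pk by (auto simp: pos_weights_def)
  have lr: "length (R @ Rk) = length (lam @ Lk)" using R lLk lRk n_def by simp
  have "C (lam @ Lk) (R @ Rk) = C (map (\<lambda>B. sum_list (nths (lam @ Lk) B)) Bs)
                  (map (\<lambda>B. C (nths (lam @ Lk) B) (nths (R @ Rk) B)) Bs)"
    using A3 pw lr op unfolding recursive_consistency_def by blast
  also have "\<dots> = C [sum_list lam, sum_list Lk] [C lam R, C Lk Rk]"
    using nths_first[of lam Lk] nths_second[of lam Lk] nths_first[of R Rk] nths_second[of R Rk]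
    by (simp add: Bs_def n_def lLk lRk R)
  also have "\<dots> = C [sum_list lam, sum_list Lk] (replicate 2 (C lam R))"
    using step(3) by (simp add: Lk_def Rk_def numeral_2_eq_2)
  also have "\<dots> = C lam R"
  proof -
    have "pos_weights [sum_list lam, sum_list Lk]"
      using pos_sum[OF lam] pos_sum[OF pk] by (simp add: pos_weights_def)
    then show ?thesis using A1 unfolding same_scale_def
      by (metis length_Cons list.size(3) numeral_2_eq_2)
  qed
  finally show ?case by (simp add: Lk_def Rk_def)
qed

lemma intmult:
  assumes A1: "same_scale C" and A3: "recursive_consistency C"
    and lam: "pos_weights lam" and R: "length R = length lam" and k: "k \<ge> 1"
  shows "C (map (\<lambda>x. real k * x) lam) R = C lam R"
proof -
  define n where "n = length lam"
  have n0: "n > 0" using lam by (simp add: pos_weights_def n_def)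
  define L where "L = concat (replicate k lam)"
  define RR where "RR = concat (replicate k R)"
  have lL: "length L = k * n" by (simp add: L_def n_def length_concat sum_list_replicate)
  have lRR: "length RR = k * n" using R by (simp add: RR_def n_def length_concat sum_list_replicate)
  have pL: "pos_weights L" using pos_concat[OF lam k] by (simp add: L_def)
  define B where "B = (\<lambda>i. {m. m < k * n \<and> m mod n = i})"
  define Bs where "Bs = map B [0..<n]"
  have op: "ordered_partition Bs (length L)"
    unfolding ordered_partition_def
  proof (intro conjI ballI allI impI)
    fix X assume "X \<in> set Bs"
    then obtain i where i: "i < n" "X = B i" by (auto simp: Bs_def)
    have "n \<le> k * n" using k by simp
    then have "i < k * n" using i by linarith
    then have "i \<in> X" using i by (simp add: B_def)
    then show "X \<noteq> {}" by auto
  next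
    show "\<Union> (set Bs) = {0..<length L}"
    proof
      show "\<Union> (set Bs) \<subseteq> {0..<length L}" by (auto simp: Bs_def B_def lL)
    next
      show "{0..<length L} \<subseteq> \<Union> (set Bs)"
      proof
        fix m assume "m \<in> {0..<length L}"
        then have "m \<in> B (m mod n)" "m mod n < n" using n0 by (auto simp: B_def lL)
        then show "m \<in> \<Union> (set Bs)" unfolding Bs_def by auto
      qed
    qed
  next
    fix j l assume "j < length Bs" "l < length Bs" "j \<noteq> l"
    then have "Bs ! j = B j" "Bs ! l = B l" by (simp_all add: Bs_def)
    moreover have "B j \<inter> B l = {}" unfolding B_def using \<open>j \<noteq> l\<close> by blast
    ultimately show "Bs ! j \<inter> Bs ! l = {}" by simp
  qed
  have nL: "nths L (B i) = replicate k (lam ! i)" if "i < n" for i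
  proof -
    have "{m \<in> {m. m mod n = i}. m < length L} = B i" by (auto simp: B_def lL)
    then have "nths L (B i) = nths L {m. m mod n = i}" by (metis nths_restrict)
    then show ?thesis using nths_mod[of i lam k] that by (simp add: L_def n_def)
  qed
  have nR: "nths RR (B i) = replicate k (R ! i)" if "i < n" for i
  proof -
    have "{m \<in> {m. m mod n = i}. m < length RR} = B i" by (auto simp: B_def lRR)
    then have "nths RR (B i) = nths RR {m. m mod n = i}" by (metis nths_restrict)
    then show ?thesis using nths_mod[of i R k] that R by (simp add: RR_def n_def)
  qed
  have "C L RR = C (map (\<lambda>X. sum_list (nths L X)) Bs) (map (\<lambda>X. C (nths L X) (nths RR X)) Bs)"
    using A3 pL op lL lRR unfolding recursive_consistency_def by simp
  also have "map (\<lambda>X. sum_list (nths L X)) Bs = map (\<lambda>x. real k * x) lam"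
  proof -
    have "map (\<lambda>X. sum_list (nths L X)) Bs = map (\<lambda>i. real k * lam ! i) [0..<n]"
      unfolding Bs_def map_map o_def
      by (rule map_cong[OF refl]) (simp add: nL sum_list_replicate)
    also have "\<dots> = map (\<lambda>x. real k * x) lam"
      by (rule nth_equalityI) (auto simp: n_def)
    finally show ?thesis .
  qed
  also have "map (\<lambda>X. C (nths L X) (nths RR X)) Bs = R"
  proof -
    have "map (\<lambda>X. C (nths L X) (nths RR X)) Bs = map (\<lambda>i. R ! i) [0..<n]"
      unfolding Bs_def map_map o_def
    proof (rule map_cong[OF refl])
      fix i assume "i \<in> set [0..<n]"
      then have i: "i < n" by simp
      have "lam ! i > 0" using lam i nth_mem[of i lam] by (auto simp: pos_weights_def n_def)
      then have "pos_weights (replicate k (lam ! i))" using k by (auto simp: pos_weights_def)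
      then show "C (nths L (B i)) (nths RR (B i)) = R ! i"
        using A1 nL[OF i] nR[OF i] unfolding same_scale_def by (metis length_replicate)
    qed
    also have "\<dots> = R" using R map_nth[of R] by (simp add: n_def)
    finally show ?thesis .
  qed
  finally show ?thesis using copies[OF A1 A3 lam R k] by (simp add: L_def RR_def)
qed

lemma ratmult:
  assumes A1: "same_scale C" and A3: "recursive_consistency C"
    and lam: "pos_weights lam" and R: "length R = length lam" and q: "q \<in> \<rat>" "q > 0"
  shows "C (map (\<lambda>x. q * x) lam) R = C lam R"
proof -
  obtain m n :: nat where n: "n \<noteq> 0" and qe: "\<bar>q\<bar> = real m / real n"
    using Rats_abs_nat_div_natE[OF q(1)] by metis
  have qe2: "q = real m / real n" using qe q(2) by simp
  then have m: "m \<ge> 1" using q(2) by (cases m) auto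
  have n1: "n \<ge> 1" using n by simp
  define mu where "mu = map (\<lambda>x. x / real n) lam"
  have pmu: "pos_weights mu" using lam n by (auto simp: pos_weights_def mu_def)
  have Rmu: "length R = length mu" using R by (simp add: mu_def)
  have e1: "map (\<lambda>x. real n * x) mu = lam" using n by (simp add: mu_def map_idI)
  have e2: "map (\<lambda>x. real m * x) mu = map (\<lambda>x. q * x) lam" by (simp add: mu_def qe2)
  have "C (map (\<lambda>x. q * x) lam) R = C mu R"
    using intmult[OF A1 A3 pmu Rmu m] e2 by simp
  also have "\<dots> = C lam R" using intmult[OF A1 A3 pmu Rmu n1] e1 by simp
  finally show ?thesis .
qed

lemma contf:
  assumes A2: "joint_continuous C" and lam: "pos_weights lam" and R: "length R = length lam"
  shows "continuous_on {0<..} (\<lambda>a. C (map (\<lambda>x. a * x) lam) R)"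
proof -
  define n where "n = length lam"
  have n1: "n \<ge> 1" using lam by (simp add: pos_weights_def n_def Suc_le_eq)
  define S where "S = {l :: nat \<Rightarrow> real. \<forall>i<n. l i > 0} \<times> (UNIV :: (nat \<Rightarrow> real) set)"
  define g where "g = (\<lambda>(l, x :: nat \<Rightarrow> real). C (map l [0..<n]) (map x [0..<n]))"
  have gc: "continuous_on S g" using A2 n1 unfolding joint_continuous_def S_def g_def by blast
  define h where "h = (\<lambda>a::real. ((\<lambda>i. a * lam ! i), (\<lambda>i. R ! i)))"
  have hc: "continuous_on {0<..} h" unfolding h_def
    by (intro continuous_intros continuous_on_coordinatewise_then_product)
  have hs: "h ` {0<..} \<subseteq> S"
  proof
    fix y assume "y \<in> h ` {0<..}"
    then obtain a where a: "a > 0" "y = h a" by auto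
    have "\<forall>i<n. a * lam ! i > 0" using lam a(1) nth_mem[of _ lam]
      by (auto simp: pos_weights_def n_def)
    then show "y \<in> S" using a by (simp add: S_def h_def)
  qed
  have "continuous_on {0<..} (\<lambda>a. g (h a))" using continuous_on_compose2[OF gc hc hs] .
  moreover have "g (h a) = C (map (\<lambda>x. a * x) lam) R" for a
  proof -
    have "map (\<lambda>i. a * lam ! i) [0..<n] = map (\<lambda>x. a * x) lam"
      by (rule nth_equalityI) (auto simp: n_def)
    moreover have "map (\<lambda>i. R ! i) [0..<n] = R" using R map_nth[of R] by (simp add: n_def)
    ultimately show ?thesis by (simp add: g_def h_def)
  qed
  ultimately show ?thesis by simp
qed

theorem lemma2:
  fixes C :: "real list \<Rightarrow> real list \<Rightarrow> real"
  assumes A1: "same_scale C"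
    and A2_cont: "joint_continuous C"
    and A2_diff: "C1_pos_partials C"
    and A3: "recursive_consistency C"
    and lam: "pos_weights lam"
    and R: "length R = length lam"
    and alpha: "(\<alpha>::real) > 0"
  shows "C (map (\<lambda>x. \<alpha> * x) lam) R = C lam R"
proof -
  define f where "f = (\<lambda>a. C (map (\<lambda>x. a * x) lam) R)"
  have fc: "continuous_on {0<..} f" using contf[OF A2_cont lam R] by (simp add: f_def)
  have "\<forall>k::nat. \<exists>r. r \<in> \<rat> \<and> \<alpha> < r \<and> r < \<alpha> + 1 / real (Suc k)"
    using Rats_dense_in_real by (metis less_add_same_cancel1 of_nat_0_less_iff zero_less_Suc zero_less_divide_1_iff)
  then obtain q where q: "\<And>k. q k \<in> \<rat> \<and> \<alpha> < q k \<and> q k < \<alpha> + 1 / real (Suc k)"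
    by metis
  have up: "(\<lambda>k. \<alpha> + 1 / real (Suc k)) \<longlonglongrightarrow> \<alpha>"
    using tendsto_add[OF tendsto_const LIMSEQ_Suc[OF lim_inverse_n']] by simp
  have l1: "\<forall>k. \<alpha> \<le> q k" using q less_imp_le by blast
  have l2: "\<forall>k. q k \<le> \<alpha> + 1 / real (Suc k)" using q less_imp_le by blast
  have qt: "q \<longlonglongrightarrow> \<alpha>"
    by (rule tendsto_sandwich[OF always_eventually[OF l1] always_eventually[OF l2] tendsto_const up])
  have "(\<lambda>k. f (q k)) \<longlonglongrightarrow> f \<alpha>"
    by (rule continuous_on_tendsto_compose[OF fc qt]) (use alpha q in \<open>auto intro: always_eventually less_trans\<close>)
  moreover have "f (q k) = C lam R" for k
    using ratmult[OF A1 A3 lam R] q[of k] alpha unfolding f_def by (meson less_trans)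
  ultimately have "(\<lambda>k. C lam R) \<longlonglongrightarrow> f \<alpha>" by simp
  then have "f \<alpha> = C lam R" using LIMSEQ_unique[OF _ tendsto_const] by blast
  then show ?thesis by (simp add: f_def)
qed

end
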